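(* Let $\mathbf{A}=(a_{ij})$ be a table with a proper row partition $(R_1,\dots,R_k)$ and a proper column partition $(C_1,\dots,C_k)$, and assume that there are numbers $c_{ab}>0$ ($1\le a,b\le k$) such that $a_{ij}=c_{ab}$ for all $1\le a,b\le k$, $i\in R_a$, $j\in C_b$. Then \[ 0={\mathrm{disc}}_k(\mathbf{A})={\mathrm{disc}}_{k+1}(\mathbf{A})=\cdots={\mathrm{disc}}_{\mathrm{rank}\,\mathbf{A}}(\mathbf{A}). \]
   Context: Standing assumptions: $\mathbf{A}$ is an $m\times n$ array of nonnegative entries whose total sum is $1$, and $\mathbf{A}$ is non-decomposable ($\mathbf{A}\mathbf{A}^T$ if $m\le n$, or $\mathbf{A}^T\mathbf{A}$ if $m>n$, is irreducible); in particular all row sums $d_{row,i}=\sum_j a_{ij}$ and column sums $d_{col,j}=\sum_i a_{ij}$ are positive. Let $R$ be the row set and $C$ the column set. For $X\subset R$, $Y\subset C$: ${\mathrm{Vol}}(X)=\sum_{i\in X}d_{row,i}$, ${\mathrm{Vol}}(Y)=\sum_{j\in Y}d_{col,j}$, $a(X,Y)=\sum_{i\in X}\sum_{j\in Y}a_{ij}$, and for nonempty $X,Y$, $\rho(X,Y)=\frac{a(X,Y)}{{\mathrm{Vol}}(X){\mathrm{Vol}}(Y)}$. For a proper $\ell$-partition $R_1,\dots,R_\ell$ of $R$ and $C_1,\dots,C_\ell$ of $C$ (all parts nonempty), and nonempty $X\subset R_a$, $Y\subset C_b$, ${\mathrm{disc}}(X,Y;R_a,C_b)=|\rho(X,Y)-\rho(R_a,C_b)|\sqrt{{\mathrm{Vol}}(X){\mathrm{Vol}}(Y)}$;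 ${\mathrm{disc}}(\mathbf{A};R_1,\dots,R_\ell,C_1,\dots,C_\ell)=\max_{1\le a,b\le \ell}\max_{X\subset R_a,\,Y\subset C_b}{\mathrm{disc}}(X,Y;R_a,C_b)$; and ${\mathrm{disc}}_\ell(\mathbf{A})$ is the minimum of this quantity over all proper $\ell$-partitions of the rows and of the columns. *)

theory Defs
  imports Complex_Main "Jordan_Normal_Form.DL_Rank"
begin

text \<open>An m x n table A is a function nat => nat => real; rows are {0..<m}, columns {0..<n}.\<close>

definition rowsum :: "(nat \<Rightarrow> nat \<Rightarrow> real) \<Rightarrow> nat \<Rightarrow> nat \<Rightarrow> real" where
  "rowsum A n i = (\<Sum>j<n. A i j)"

definition colsum :: "(nat \<Rightarrow> nat \<Rightarrow> real) \<Rightarrow> nat \<Rightarrow> nat \<Rightarrow> real" where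
  "colsum A m j = (\<Sum>i<m. A i j)"

definition VolR :: "(nat \<Rightarrow> nat \<Rightarrow> real) \<Rightarrow> nat \<Rightarrow> nat set \<Rightarrow> real" where
  "VolR A n X = (\<Sum>i\<in>X. rowsum A n i)"

definition VolC :: "(nat \<Rightarrow> nat \<Rightarrow> real) \<Rightarrow> nat \<Rightarrow> nat set \<Rightarrow> real" where
  "VolC A m Y = (\<Sum>j\<in>Y. colsum A m j)"

definition aXY :: "(nat \<Rightarrow> nat \<Rightarrow> real) \<Rightarrow> nat set \<Rightarrow> nat set \<Rightarrow> real" where
  "aXY A X Y = (\<Sum>i\<in>X. \<Sum>j\<in>Y. A i j)"

definition rho :: "(nat \<Rightarrow> nat \<Rightarrow> real) \<Rightarrow> nat \<Rightarrow> nat \<Rightarrow> nat set \<Rightarrow> nat set \<Rightarrow> real" where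
  "rho A m n X Y = aXY A X Y / (VolR A n X * VolC A m Y)"

definition disc_pair :: "(nat \<Rightarrow> nat \<Rightarrow> real) \<Rightarrow> nat \<Rightarrow> nat \<Rightarrow> nat set \<Rightarrow> nat set \<Rightarrow> nat set \<Rightarrow> nat set \<Rightarrow> real" where
  "disc_pair A m n X Y Ra Cb =
     \<bar>rho A m n X Y - rho A m n Ra Cb\<bar> * sqrt (VolR A n X * VolC A m Y)"

text \<open>A proper l-partition of {0..<N}: parts P 0, ..., P (l-1), nonempty, pairwise disjoint,
  covering {0..<N}; by convention P a = {} for a >= l (so that the set of partitions is finite).\<close>
definition proper_partition :: "nat \<Rightarrow> nat \<Rightarrow> (nat \<Rightarrow> nat set) \<Rightarrow> bool" where
  "proper_partition N l P \<longleftrightarrow>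
     (\<forall>a<l. P a \<noteq> {}) \<and>
     (\<forall>a<l. \<forall>b<l. a \<noteq> b \<longrightarrow> P a \<inter> P b = {}) \<and>
     (\<Union>a<l. P a) = {0..<N} \<and>
     (\<forall>a\<ge>l. P a = {})"

definition disc_part :: "(nat \<Rightarrow> nat \<Rightarrow> real) \<Rightarrow> nat \<Rightarrow> nat \<Rightarrow> nat \<Rightarrow> (nat \<Rightarrow> nat set) \<Rightarrow> (nat \<Rightarrow> nat set) \<Rightarrow> real" where
  "disc_part A m n l R C =
     Max {disc_pair A m n X Y (R a) (C b) | a b X Y.
            a < l \<and> b < l \<and> X \<subseteq> R a \<and> X \<noteq> {} \<and> Y \<subseteq> C b \<and> Y \<noteq> {}}"

definition disc_l :: "nat \<Rightarrow> (nat \<Rightarrow> nat \<Rightarrow> real) \<Rightarrow> nat \<Rightarrow> nat \<Rightarrow> real" where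
  "disc_l l A m n =
     Min {disc_part A m n l R C | R C. proper_partition m l R \<and> proper_partition n l C}"

definition irreducible_mat :: "nat \<Rightarrow> (nat \<Rightarrow> nat \<Rightarrow> real) \<Rightarrow> bool" where
  "irreducible_mat N M \<longleftrightarrow>
     (\<forall>i<N. \<forall>j<N. (i, j) \<in> {(p, q). p < N \<and> q < N \<and> M p q \<noteq> 0}\<^sup>+)"

definition non_decomposable :: "(nat \<Rightarrow> nat \<Rightarrow> real) \<Rightarrow> nat \<Rightarrow> nat \<Rightarrow> bool" where
  "non_decomposable A m n \<longleftrightarrow>
     (if m \<le> n then irreducible_mat m (\<lambda>i i'. \<Sum>j<n. A i j * A i' j)
      else irreducible_mat n (\<lambda>j j'. \<Sum>i<m. A i j * A i j'))"

definition table_rank :: "(nat \<Rightarrow> nat \<Rightarrow> real) \<Rightarrow> nat \<Rightarrow> nat \<Rightarrow> nat" where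
  "table_rank A m n = vec_space.rank m (mat m n (\<lambda>(i, j). A i j))"

end

theory Submission
  imports Defs
begin

lemma (in vec_space) rank_le_card_cols:
  assumes "A \<in> carrier_mat n nc"
  shows "rank A \<le> card (set (cols A))"
proof -
  obtain S where "maximal S (\<lambda>T. T \<subseteq> set (cols A) \<and> lin_indpt T)"
    using maximal_exists[of "(\<lambda>T. T \<subseteq> set (cols A) \<and> lin_indpt T)" "card (set (cols A))" "{}"]
    by (meson List.finite_set card_mono empty_iff empty_subsetI finite_lin_indpt2 rev_finite_subset)
  then have "card S \<le> card (set (cols A))" by (simp add: card_mono maximal_def)
  then show ?thesis
    using rank_card_indpt[OF assms \<open>maximal S (\<lambda>T. T \<subseteq> set (cols A) \<and> lin_indpt T)\<close>]
    by simp
qed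

lemma pp_ne: "proper_partition N l P \<Longrightarrow> a < l \<Longrightarrow> P a \<noteq> {}"
  by (simp add: proper_partition_def)

lemma pp_disj:
  assumes "proper_partition N l P" "a < l" "b < l" "x \<in> P a" "x \<in> P b"
  shows "a = b"
proof (rule ccontr)
  assume "a \<noteq> b"
  then have "P a \<inter> P b = {}" using assms(1-3) by (simp add: proper_partition_def)
  then show False using assms(4,5) by (simp add: disjoint_iff)
qed

lemma pp_sub:
  assumes "proper_partition N l P" "a < l"
  shows "P a \<subseteq> {0..<N}"
proof -
  have "P a \<subseteq> (\<Union>a<l. P a)" using assms(2) by (simp add: SUP_upper)
  then show ?thesis using assms(1) by (simp add: proper_partition_def)
qed

lemma pp_cover:
  assumes "proper_partition N l P" "x < N"
  shows "\<exists>a<l. x \<in> P a"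
proof -
  have "x \<in> (\<Union>a<l. P a)" using assms by (simp add: proper_partition_def)
  then show ?thesis by auto
qed

lemma partition_finite:
  "finite {P. proper_partition N l P}"
proof -
  have "{P. proper_partition N l P} \<subseteq>
        (\<lambda>f a. if a < l then f a else {}) ` (PiE {..<l} (\<lambda>_. Pow {0..<N}))"
  proof
    fix P assume "P \<in> {P. proper_partition N l P}"
    then have pp: "proper_partition N l P" by simp
    have "restrict P {..<l} \<in> PiE {..<l} (\<lambda>_. Pow {0..<N})"
      unfolding restrict_PiE
    proof (rule Pi_I)
      fix a assume "a \<in> {..<l}"
      then show "P a \<in> Pow {0..<N}" using pp_sub[OF pp, of a] by simp
    qed
    moreover have "P = (\<lambda>a. if a < l then restrict P {..<l} a else {})"
    proof
      fix a
      have z: "l \<le> a \<Longrightarrow> P a = {}" using pp by (simp add: proper_partition_def)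
      show "P a = (if a < l then restrict P {..<l} a else {})"
        by (cases "a < l") (simp_all add: z)
    qed
    ultimately show "P \<in> (\<lambda>f a. if a < l then f a else {}) ` (PiE {..<l} (\<lambda>_. Pow {0..<N}))"
      using rev_image_eqI[of "restrict P {..<l}" _ P "\<lambda>f a. if a < l then f a else {}"] by simp
  qed
  moreover have "finite (PiE {..<l} (\<lambda>_. Pow {0..<N}))"
    by (intro finite_PiE) auto
  ultimately show ?thesis using finite_subset finite_imageI by fast
qed

lemma disc_pair_nonneg:
  assumes "\<forall>i<m. \<forall>j<n. A i j \<ge> 0" "X \<subseteq> {0..<m}" "Y \<subseteq> {0..<n}"
  shows "disc_pair A m n X Y Ra Cb \<ge> 0"
proof -
  have "VolR A n X \<ge> 0" unfolding VolR_def rowsum_def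
  proof (rule sum_nonneg)+
    fix i j assume "i \<in> X" "j \<in> {..<n}"
    then have "i < m" "j < n" using assms(2) by auto
    then show "0 \<le> A i j" using assms(1) by simp
  qed
  moreover have "VolC A m Y \<ge> 0" unfolding VolC_def colsum_def
  proof (rule sum_nonneg)+
    fix j i assume "j \<in> Y" "i \<in> {..<m}"
    then have "i < m" "j < n" using assms(3) by auto
    then show "0 \<le> A i j" using assms(1) by simp
  qed
  ultimately have "0 \<le> sqrt (VolR A n X * VolC A m Y)" by simp
  then show ?thesis unfolding disc_pair_def by simp
qed

lemma disc_part_nonneg:
  assumes "proper_partition m l R" "proper_partition n l C" "l \<ge> 1"
    and nn: "\<forall>i<m. \<forall>j<n. A i j \<ge> 0"
  shows "disc_part A m n l R C \<ge> 0"
proof -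
  let ?S = "{disc_pair A m n X Y (R a) (C b) | a b X Y.
            a < l \<and> b < l \<and> X \<subseteq> R a \<and> X \<noteq> {} \<and> Y \<subseteq> C b \<and> Y \<noteq> {}}"
  have "?S \<subseteq> (\<lambda>(a,b,X,Y). disc_pair A m n X Y (R a) (C b)) `
          ({..<l} \<times> {..<l} \<times> Pow {0..<m} \<times> Pow {0..<n})"
  proof
    fix x assume "x \<in> ?S"
    then obtain a b X Y where h: "x = disc_pair A m n X Y (R a) (C b)" "a < l" "b < l"
      "X \<subseteq> R a" "Y \<subseteq> C b" by blast
    have "R a \<subseteq> {0..<m}" "C b \<subseteq> {0..<n}"
      using pp_sub[OF assms(1) h(2)] pp_sub[OF assms(2) h(3)] by simp_all
    then have "(a,b,X,Y) \<in> {..<l} \<times> {..<l} \<times> Pow {0..<m} \<times> Pow {0..<n}"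
      using h by auto
    then show "x \<in> (\<lambda>(a,b,X,Y). disc_pair A m n X Y (R a) (C b)) `
          ({..<l} \<times> {..<l} \<times> Pow {0..<m} \<times> Pow {0..<n})"
      using h(1) by (intro image_eqI[where x="(a,b,X,Y)"]) simp_all
  qed
  then have fin: "finite ?S" by (rule finite_subset) auto
  have l0: "0 < l" using assms(3) by simp
  have ne: "R 0 \<noteq> {}" "C 0 \<noteq> {}" using pp_ne[OF assms(1) l0] pp_ne[OF assms(2) l0] by simp_all
  have sub: "R 0 \<subseteq> {0..<m}" "C 0 \<subseteq> {0..<n}"
    using pp_sub[OF assms(1) l0] pp_sub[OF assms(2) l0] by simp_all
  have mem: "disc_pair A m n (R 0) (C 0) (R 0) (C 0) \<in> ?S"
    apply (rule CollectI, rule exI[of _ 0], rule exI[of _ 0], rule exI[of _ "R 0"], rule exI[of _ "C 0"])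
    using l0 ne by simp
  show ?thesis unfolding disc_part_def
    using Max_ge[OF fin mem] disc_pair_nonneg[OF nn sub, of "R 0" "C 0"] by linarith
qed

lemma disc_l_zero:
  assumes "proper_partition m l R" "proper_partition n l C" "l \<ge> 1"
    and "disc_part A m n l R C = 0" and nn: "\<forall>i<m. \<forall>j<n. A i j \<ge> 0"
  shows "disc_l l A m n = 0"
proof -
  let ?S = "{disc_part A m n l R C | R C. proper_partition m l R \<and> proper_partition n l C}"
  have "?S = (\<lambda>(R,C). disc_part A m n l R C) ` ({R. proper_partition m l R} \<times> {C. proper_partition n l C})"
    by auto
  then have fin: "finite ?S" using partition_finite by simp
  show ?thesis unfolding disc_l_def
  proof (rule Min_eqI[OF fin])
    fix y assume "y \<in> ?S"
    then obtain R' C' where "y = disc_part A m n l R' C'" "proper_partition m l R'" "proper_partition n l C'"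
      by blast
    then show "0 \<le> y" using disc_part_nonneg[OF _ _ assms(3) nn] by blast
  next
    show "0 \<in> ?S"
      apply (rule CollectI, rule exI[of _ R], rule exI[of _ C])
      using assms(1,2,4) by simp
  qed
qed


theorem mainTheorem5:
  fixes A :: "nat \<Rightarrow> nat \<Rightarrow> real" and m n k :: nat
    and R C :: "nat \<Rightarrow> nat set" and c :: "nat \<Rightarrow> nat \<Rightarrow> real"
  assumes nonneg: "\<forall>i<m. \<forall>j<n. A i j \<ge> 0"
    and total: "(\<Sum>i<m. \<Sum>j<n. A i j) = 1"
    and nondec: "non_decomposable A m n"
    and k_pos: "k \<ge> 1"
    and partR: "proper_partition m k R"
    and partC: "proper_partition n k C"
    and c_pos: "\<forall>a<k. \<forall>b<k. c a b > 0"
    and block: "\<forall>a<k. \<forall>b<k. \<forall>i\<in>R a. \<forall>j\<in>C b. A i j = c a b"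
  shows "disc_l k A m n = 0 \<and>
         (\<forall>l. k \<le> l \<and> l \<le> table_rank A m n \<longrightarrow> disc_l l A m n = 0)"
proof -
  have disjR: "\<And>a a' i. a < k \<Longrightarrow> a' < k \<Longrightarrow> i \<in> R a \<Longrightarrow> i \<in> R a' \<Longrightarrow> a = a'"
    using pp_disj[OF partR] by blast
  have coverR: "\<And>i. i < m \<Longrightarrow> \<exists>a<k. i \<in> R a" using pp_cover[OF partR] by blast
  have coverC: "\<And>j. j < n \<Longrightarrow> \<exists>b<k. j \<in> C b" using pp_cover[OF partC] by blast
  have subR: "\<And>a. a < k \<Longrightarrow> R a \<subseteq> {0..<m}" using pp_sub[OF partR] by blast
  have subC: "\<And>b. b < k \<Longrightarrow> C b \<subseteq> {0..<n}" using pp_sub[OF partC] by blast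
  have neR: "\<And>a. a < k \<Longrightarrow> R a \<noteq> {}" using pp_ne[OF partR] by blast
  have neC: "\<And>b. b < k \<Longrightarrow> C b \<noteq> {}" using pp_ne[OF partC] by blast
  have blk: "\<And>a b i j. a < k \<Longrightarrow> b < k \<Longrightarrow> i \<in> R a \<Longrightarrow> j \<in> C b \<Longrightarrow> A i j = c a b"
    using block by simp
  define r where "r a = rowsum A n (SOME i. i \<in> R a)" for a
  define s where "s b = colsum A m (SOME j. j \<in> C b)" for b
  have rowc: "rowsum A n i = r a" if "a < k" "i \<in> R a" for a i
  proof -
    have i': "(SOME i. i \<in> R a) \<in> R a" using that(2) by (rule someI)
    show ?thesis unfolding r_def rowsum_def
    proof (rule sum.cong)
      fix j assume "j \<in> {..<n}"
      then obtain b where "b < k" "j \<in> C b" using coverC by auto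
      then show "A i j = A (SOME i. i \<in> R a) j" using blk[OF that(1) _ that(2)] blk[OF that(1) _ i'] by simp
    qed simp
  qed
  have colc: "colsum A m j = s b" if "b < k" "j \<in> C b" for b j
  proof -
    have j': "(SOME j. j \<in> C b) \<in> C b" using that(2) by (rule someI)
    show ?thesis unfolding s_def colsum_def
    proof (rule sum.cong)
      fix i assume "i \<in> {..<m}"
      then obtain a where "a < k" "i \<in> R a" using coverR by auto
      then show "A i j = A i (SOME j. j \<in> C b)" using blk[OF _ that(1) _ that(2)] blk[OF _ that(1) _ j'] by simp
    qed simp
  qed
  have rho_eq: "rho A m n X Y = c a b / (r a * s b)"
    if "a < k" "b < k" "X \<subseteq> R a" "X \<noteq> {}" "Y \<subseteq> C b" "Y \<noteq> {}" for a b X Y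
  proof -
    have fX: "finite X" using finite_subset[OF subset_trans[OF that(3) subR[OF that(1)]]] by simp
    have fY: "finite Y" using finite_subset[OF subset_trans[OF that(5) subC[OF that(2)]]] by simp
    have cX: "card X > 0" using fX that(4) by (simp add: card_gt_0_iff)
    have cY: "card Y > 0" using fY that(6) by (simp add: card_gt_0_iff)
    have "VolR A n X = (\<Sum>i\<in>X. r a)" unfolding VolR_def
    proof (rule sum.cong[OF refl])
      fix i assume "i \<in> X" then show "rowsum A n i = r a" using rowc[OF that(1)] that(3) by blast
    qed
    then have v1: "VolR A n X = card X * r a" by simp
    have "VolC A m Y = (\<Sum>j\<in>Y. s b)" unfolding VolC_def
    proof (rule sum.cong[OF refl])
      fix j assume "j \<in> Y" then show "colsum A m j = s b" using colc[OF that(2)] that(5) by blast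
    qed
    then have v2: "VolC A m Y = card Y * s b" by simp
    have "aXY A X Y = (\<Sum>i\<in>X. \<Sum>j\<in>Y. c a b)" unfolding aXY_def
    proof (rule sum.cong[OF refl])
      fix i assume i: "i \<in> X"
      show "(\<Sum>j\<in>Y. A i j) = (\<Sum>j\<in>Y. c a b)"
      proof (rule sum.cong[OF refl])
        fix j assume "j \<in> Y"
        then show "A i j = c a b" using blk[OF that(1,2)] that(3,5) i by blast
      qed
    qed
    then have v3: "aXY A X Y = card X * (card Y * c a b)" by simp
    show ?thesis unfolding rho_def v1 v2 v3 using cX cY by simp
  qed
  have dp0: "disc_pair A m n X Y (R a) (C b) = 0"
    if "a < k" "b < k" "X \<subseteq> R a" "X \<noteq> {}" "Y \<subseteq> C b" "Y \<noteq> {}" for a b X Y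
    unfolding disc_pair_def
    using rho_eq[OF that] rho_eq[OF that(1,2) order_refl neR[OF that(1)] order_refl neC[OF that(2)]]
    by simp
  have "{disc_pair A m n X Y (R a) (C b) | a b X Y.
            a < k \<and> b < k \<and> X \<subseteq> R a \<and> X \<noteq> {} \<and> Y \<subseteq> C b \<and> Y \<noteq> {}} = {0}"
  proof
    show "{0} \<subseteq> {disc_pair A m n X Y (R a) (C b) | a b X Y.
            a < k \<and> b < k \<and> X \<subseteq> R a \<and> X \<noteq> {} \<and> Y \<subseteq> C b \<and> Y \<noteq> {}}"
    proof -
      have k0: "0 < k" using k_pos by simp
      have "disc_pair A m n (R 0) (C 0) (R 0) (C 0) = 0"
        using dp0[of 0 0 "R 0" "C 0"] neR[OF k0] neC[OF k0] k0 by simp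
      moreover have "disc_pair A m n (R 0) (C 0) (R 0) (C 0) \<in> {disc_pair A m n X Y (R a) (C b) | a b X Y.
            a < k \<and> b < k \<and> X \<subseteq> R a \<and> X \<noteq> {} \<and> Y \<subseteq> C b \<and> Y \<noteq> {}}"
        apply (rule CollectI, rule exI[of _ 0], rule exI[of _ 0], rule exI[of _ "R 0"], rule exI[of _ "C 0"])
        using neR[OF k0] neC[OF k0] k0 by simp
      ultimately show ?thesis by simp
    qed
  next
    show "{disc_pair A m n X Y (R a) (C b) | a b X Y.
            a < k \<and> b < k \<and> X \<subseteq> R a \<and> X \<noteq> {} \<and> Y \<subseteq> C b \<and> Y \<noteq> {}} \<subseteq> {0}"
    proof
      fix x assume "x \<in> {disc_pair A m n X Y (R a) (C b) | a b X Y.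
            a < k \<and> b < k \<and> X \<subseteq> R a \<and> X \<noteq> {} \<and> Y \<subseteq> C b \<and> Y \<noteq> {}}"
      then show "x \<in> {0}"
      proof (elim CollectE exE conjE)
        fix a b X Y assume h: "x = disc_pair A m n X Y (R a) (C b)" "a < k" "b < k"
          "X \<subseteq> R a" "X \<noteq> {}" "Y \<subseteq> C b" "Y \<noteq> {}"
        show ?thesis using dp0[OF h(2-7)] h(1) by simp
      qed
    qed
  qed
  then have dpart: "disc_part A m n k R C = 0" unfolding disc_part_def by simp
  have dk: "disc_l k A m n = 0" by (rule disc_l_zero[OF partR partC k_pos dpart nonneg])
  define M where "M = mat m n (\<lambda>(i, j). A i j)"
  have Mc: "M \<in> carrier_mat m n" unfolding M_def by simp
  have "set (cols M) \<subseteq> (\<lambda>b. col M (SOME j. j \<in> C b)) ` {..<k}"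
  proof
    fix x assume "x \<in> set (cols M)"
    then obtain j where j: "j < n" "x = col M j" unfolding cols_def M_def by auto
    then obtain b where b: "b < k" "j \<in> C b" using coverC by auto
    have j': "(SOME j. j \<in> C b) \<in> C b" using b(2) by (rule someI)
    have j'n: "(SOME j. j \<in> C b) < n" using subC[OF b(1)] j' by auto
    have "col M j = col M (SOME j. j \<in> C b)"
    proof (rule eq_vecI)
      fix i assume "i < dim_vec (col M (SOME j. j \<in> C b))"
      then have i: "i < m" unfolding M_def by simp
      then obtain a where a: "a < k" "i \<in> R a" using coverR by auto
      show "col M j $ i = col M (SOME j. j \<in> C b) $ i"
        using i j(1) j'n blk[OF a(1) b(1) a(2) b(2)] blk[OF a(1) b(1) a(2) j'] unfolding M_def by simp
    qed (simp add: M_def)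
    then show "x \<in> (\<lambda>b. col M (SOME j. j \<in> C b)) ` {..<k}" using j b by auto
  qed
  then have "card (set (cols M)) \<le> k"
  proof -
    have "card (set (cols M)) \<le> card ((\<lambda>b. col M (SOME j. j \<in> C b)) ` {..<k})"
      using \<open>set (cols M) \<subseteq> _\<close> by (intro card_mono) auto
    also have "\<dots> \<le> card {..<k}" by (rule card_image_le) simp
    finally show ?thesis by simp
  qed
  then have rk: "table_rank A m n \<le> k"
    unfolding table_rank_def M_def[symmetric]
    using vec_space.rank_le_card_cols[OF Mc] by linarith
  have "\<forall>l. k \<le> l \<and> l \<le> table_rank A m n \<longrightarrow> disc_l l A m n = 0"
  proof (intro allI impI)
    fix l assume "k \<le> l \<and> l \<le> table_rank A m n"
    then have "l = k" using rk by simp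
    then show "disc_l l A m n = 0" using dk by simp
  qed
  then show ?thesis using dk by simp
qed

end
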